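(* Let $Z$ be a nonempty compact metric space. Then there exists a topologically mixing dynamical system $(X,T)$ whose set of minimal points is homeomorphic to $Z$ and such that every minimal point of $(X,T)$ is a fixed point.
   Context: A dynamical system $(X,T)$: $X$ is a compact metric space with more than one point and without isolated points, $T:X\to X$ a continuous surjection. $(X,T)$ is topologically mixing if for all nonempty open $U,V\subset X$ the set $\{n\in\mathbb{Z}_+:U\cap T^{-n}V\neq\varnothing\}$ is cofinite. A point is minimal if it lies in a minimal subset, i.e. a nonempty closed $T$-invariant set containing no nonempty closed proper subset $K'$ with $TK'\subset K'$. *)

theory Defs
  imports "HOL-Analysis.Analysis"
begin

definition dyn_system :: "'a::metric_space set \<Rightarrow> ('a \<Rightarrow> 'a) \<Rightarrow> bool" where
  "dyn_system X T \<longleftrightarrow> compact X \<and> (\<exists>x\<in>X. \<exists>y\<in>X. x \<noteq> y) \<and> (\<forall>x\<in>X. x islimpt X)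
     \<and> continuous_on X T \<and> T ` X = X"

definition top_mixing :: "'a::topological_space set \<Rightarrow> ('a \<Rightarrow> 'a) \<Rightarrow> bool" where
  "top_mixing X T \<longleftrightarrow>
     (\<forall>U V. openin (top_of_set X) U \<longrightarrow> openin (top_of_set X) V \<longrightarrow> U \<noteq> {} \<longrightarrow> V \<noteq> {} \<longrightarrow>
        finite {n::nat. U \<inter> {x\<in>X. (T ^^ n) x \<in> V} = {}})"

definition minimal_subset :: "'a::topological_space set \<Rightarrow> ('a \<Rightarrow> 'a) \<Rightarrow> 'a set \<Rightarrow> bool" where
  "minimal_subset X T K \<longleftrightarrow> K \<subseteq> X \<and> K \<noteq> {} \<and> closed K \<and> T ` K \<subseteq> K \<and>
     \<not> (\<exists>K'. K' \<subset> K \<and> K' \<noteq> {} \<and> closed K' \<and> T ` K' \<subseteq> K')"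

definition minimal_points :: "'a::topological_space set \<Rightarrow> ('a \<Rightarrow> 'a) \<Rightarrow> 'a set" where
  "minimal_points X T = {x. \<exists>K. minimal_subset X T K \<and> x \<in> K}"

end

theory Submission imports Defs begin


lemma embed_compact:
  fixes S :: "'b::metric_space set"
  assumes "compact S" "S \<noteq> {}"
  obtains \<phi> :: "'b \<Rightarrow> nat \<Rightarrow> real" where "continuous_on S \<phi>" "inj_on \<phi> S"
proof -
  have "\<forall>n::nat. \<exists>k. finite k \<and> k \<subseteq> S \<and> S \<subseteq> (\<Union>x\<in>k. ball x (1/real (Suc n)))"
    using seq_compact_imp_totally_bounded[OF compact_imp_seq_compact[OF assms(1)]] by simp
  then obtain f where f: "\<And>n::nat. finite (f n) \<and> f n \<subseteq> S \<and> S \<subseteq> (\<Union>x\<in>f n. ball x (1/real (Suc n)))"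
    by metis
  define D where "D = (\<Union>n. f n)"
  have cD: "countable D" unfolding D_def using f by (simp add: countable_finite)
  have "D \<noteq> {}" unfolding D_def using f[of 0] assms(2) by auto
  define d where "d = from_nat_into D"
  have rd: "range d = D" unfolding d_def using cD \<open>D \<noteq> {}\<close> by (simp add: range_from_nat_into)
  have dense: "\<exists>k. dist x (d k) < e" if xS: "x \<in> S" and "e > 0" for x e
  proof -
    obtain n where n: "1 / real (Suc n) < e" using \<open>e>0\<close>
      by (metis reals_Archimedean inverse_eq_divide)
    obtain c where c: "c \<in> f n" "x \<in> ball c (1/real (Suc n))" using f[of n] xS by blast
    then have "c \<in> range d" using rd D_def by auto
    then obtain k where "c = d k" by auto
    then have "dist x (d k) < e" using c n by (simp add: dist_commute)
    then show ?thesis by blast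
  qed
  define \<phi> where "\<phi> = (\<lambda>x k. dist x (d k))"
  show ?thesis
  proof
    show "continuous_on S \<phi>" unfolding \<phi>_def by (intro continuous_intros)
    show "inj_on \<phi> S"
    proof (rule inj_onI)
      fix x x' assume xs: "x \<in> S" "x' \<in> S" and eq: "\<phi> x = \<phi> x'"
      have "dist x x' < e" if "e > 0" for e
      proof -
        obtain k where k: "dist x (d k) < e/2" using dense[OF xs(1)] \<open>e>0\<close> by (meson half_gt_zero)
        have "dist x' (d k) = dist x (d k)" using fun_cong[OF eq, of k] by (simp add: \<phi>_def)
        then show ?thesis using k dist_triangle[of x x' "d k"] by (simp add: dist_commute)
      qed
      then show "x = x'" by (metis dist_pos_lt less_irrefl)
    qed
  qed
qed




definition FP :: "'a::topological_space set \<Rightarrow> ('a \<Rightarrow> 'a) \<Rightarrow> bool" where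
  "FP X T \<longleftrightarrow> (\<forall>K. K \<subseteq> X \<longrightarrow> K \<noteq> {} \<longrightarrow> closed K \<longrightarrow> T ` K \<subseteq> K \<longrightarrow> (\<exists>x\<in>K. T x = x))"

lemma FP_minimal_points:
  fixes X :: "'a::t1_space set"
  assumes "FP X T"
  shows "minimal_points X T = {x\<in>X. T x = x}"
proof
  show "minimal_points X T \<subseteq> {x\<in>X. T x = x}"
  proof
    fix x assume "x \<in> minimal_points X T"
    then obtain K where K: "minimal_subset X T K" "x \<in> K" unfolding minimal_points_def by auto
    then have KK: "K \<subseteq> X" "K \<noteq> {}" "closed K" "T ` K \<subseteq> K"
      and nK: "\<not> (\<exists>K'. K' \<subset> K \<and> K' \<noteq> {} \<and> closed K' \<and> T ` K' \<subseteq> K')"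
      unfolding minimal_subset_def by auto
    obtain y where y: "y \<in> K" "T y = y" using assms KK unfolding FP_def by blast
    have "\<not> {y} \<subset> K" using nK y by auto
    then have "K = {y}" using y by auto
    then show "x \<in> {x\<in>X. T x = x}" using K(2) y KK by auto
  qed
next
  show "{x\<in>X. T x = x} \<subseteq> minimal_points X T"
  proof
    fix x assume x: "x \<in> {x\<in>X. T x = x}"
    have "minimal_subset X T {x}" unfolding minimal_subset_def using x by auto
    then show "x \<in> minimal_points X T" unfolding minimal_points_def by auto
  qed
qed

lemma transfer:
  fixes B :: "'b::metric_space set" and Z :: "'a::metric_space set"
  assumes ds: "dyn_system B T" and mx: "top_mixing B T" and fp: "FP B T"
    and hz: "{x\<in>B. T x = x} homeomorphic Z"
  shows "\<exists>(X::(nat\<Rightarrow>real) set) T'. dyn_system X T' \<and> top_mixing X T' \<and>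
           minimal_points X T' homeomorphic Z \<and> (\<forall>x\<in>minimal_points X T'. T' x = x)"
proof -
  have cB: "compact B" and two: "\<exists>x\<in>B. \<exists>y\<in>B. x \<noteq> y" and lp: "\<forall>x\<in>B. x islimpt B"
    and cT: "continuous_on B T" and sT: "T ` B = B"
    using ds unfolding dyn_system_def by auto
  have "B \<noteq> {}" using two by auto
  obtain \<phi> :: "'b \<Rightarrow> nat \<Rightarrow> real" where cphi: "continuous_on B \<phi>" and iphi: "inj_on \<phi> B"
    using embed_compact[OF cB \<open>B \<noteq> {}\<close>] by blast
  define X where "X = \<phi> ` B"
  obtain \<psi> where hom: "homeomorphism B X \<phi> \<psi>"
    using homeomorphism_compact[OF cB cphi X_def[symmetric] iphi] by blast
  have psiphi: "\<And>x. x \<in> B \<Longrightarrow> \<psi> (\<phi> x) = x" and psiX: "\<psi> ` X = B"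
    and phipsi: "\<And>y. y \<in> X \<Longrightarrow> \<phi> (\<psi> y) = y" and cpsi: "continuous_on X \<psi>"
    using hom unfolding homeomorphism_def by auto
  define T' where "T' = (\<lambda>y. \<phi> (T (\<psi> y)))"
  have TB: "\<And>x. x \<in> B \<Longrightarrow> T x \<in> B" using sT by auto
  have T'phi: "T' (\<phi> x) = \<phi> (T x)" if "x \<in> B" for x using that psiphi by (simp add: T'_def)
  have iter: "(T' ^^ n) (\<phi> x) = \<phi> ((T ^^ n) x) \<and> (T ^^ n) x \<in> B" if "x \<in> B" for x n
    using that by (induction n) (auto simp: T'phi TB)
  have cX: "compact X" unfolding X_def using cB cphi compact_continuous_image by blast
  have "dyn_system X T'"
    unfolding dyn_system_def
  proof (intro conjI)
    show "compact X" by fact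
    show "\<exists>x\<in>X. \<exists>y\<in>X. x \<noteq> y" using two iphi unfolding X_def by (metis image_eqI inj_on_contraD)
    show "\<forall>x\<in>X. x islimpt X"
    proof
      fix y assume "y \<in> X"
      then obtain x where x: "x \<in> B" "y = \<phi> x" unfolding X_def by auto
      then obtain f where f: "\<And>n. f n \<in> B - {x}" "f \<longlonglongrightarrow> x"
        using lp unfolding islimpt_sequential by blast
      have "(\<phi> \<circ> f) \<longlonglongrightarrow> \<phi> x"
        using cphi x(1) f by (metis DiffD1 continuous_on_sequentially)
      moreover have "\<And>n. (\<phi> \<circ> f) n \<in> X - {\<phi> x}"
        using f x iphi unfolding X_def by (auto simp: inj_on_eq_iff)
      ultimately show "y islimpt X" unfolding islimpt_sequential x(2) by blast
    qed
    show "continuous_on X T'" unfolding T'_def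
    proof (rule continuous_on_compose2[OF cphi])
      show "continuous_on X (\<lambda>y. T (\<psi> y))"
        by (rule continuous_on_compose2[OF cT cpsi]) (use psiX in auto)
      show "(\<lambda>y. T (\<psi> y)) ` X \<subseteq> B" using psiX TB by auto
    qed
    have "T' ` X = \<phi> ` (T ` B)" unfolding X_def by (auto simp: T'phi image_image)
    then show "T' ` X = X" using sT X_def by simp
  qed
  moreover have "top_mixing X T'"
    unfolding top_mixing_def
  proof (intro allI impI)
    fix U V assume U: "openin (top_of_set X) U" and V: "openin (top_of_set X) V"
      and "U \<noteq> {}" "V \<noteq> {}"
    define U0 where "U0 = {x\<in>B. \<phi> x \<in> U}"
    define V0 where "V0 = {x\<in>B. \<phi> x \<in> V}"
    have "openin (top_of_set B) U0" unfolding U0_def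
      using continuous_openin_preimage[OF cphi _ U] X_def by (simp add: vimage_def Int_def conj_commute)
    moreover have "openin (top_of_set B) V0" unfolding V0_def
      using continuous_openin_preimage[OF cphi _ V] X_def by (simp add: vimage_def Int_def conj_commute)
    moreover have "U0 \<noteq> {}" using \<open>U \<noteq> {}\<close> openin_subset[OF U] unfolding U0_def X_def by auto
    moreover have "V0 \<noteq> {}" using \<open>V \<noteq> {}\<close> openin_subset[OF V] unfolding V0_def X_def by auto
    ultimately have fin: "finite {n. U0 \<inter> {x\<in>B. (T ^^ n) x \<in> V0} = {}}"
      using mx unfolding top_mixing_def by blast
    have "{n. U \<inter> {x\<in>X. (T' ^^ n) x \<in> V} = {}} \<subseteq> {n. U0 \<inter> {x\<in>B. (T ^^ n) x \<in> V0} = {}}"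
    proof
      fix n assume "n \<in> {n. U \<inter> {x\<in>X. (T' ^^ n) x \<in> V} = {}}"
      then have e: "U \<inter> {x\<in>X. (T' ^^ n) x \<in> V} = {}" by simp
      show "n \<in> {n. U0 \<inter> {x\<in>B. (T ^^ n) x \<in> V0} = {}}"
      proof (rule ccontr)
        assume "n \<notin> {n. U0 \<inter> {x\<in>B. (T ^^ n) x \<in> V0} = {}}"
        then obtain x where "x \<in> U0" "x \<in> B" "(T ^^ n) x \<in> V0" by auto
        then have "\<phi> x \<in> U \<inter> {x\<in>X. (T' ^^ n) x \<in> V}"
          unfolding U0_def V0_def X_def using iter[of x n] by auto
        then show False using e by auto
      qed
    qed
    then show "finite {n. U \<inter> {x\<in>X. (T' ^^ n) x \<in> V} = {}}" using fin finite_subset by blast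
  qed
  moreover have fix': "{y\<in>X. T' y = y} = \<phi> ` {x\<in>B. T x = x}"
    unfolding X_def using iphi TB by (auto simp: T'phi inj_on_eq_iff)
  moreover have "FP X T'"
    unfolding FP_def
  proof (intro allI impI)
    fix K assume K: "K \<subseteq> X" "K \<noteq> {}" "closed K" "T' ` K \<subseteq> K"
    have "compact K" using K cX compact_Int_closed[OF cX K(3)] by (simp add: Int_absorb1)
    then have "compact (\<psi> ` K)" using continuous_on_subset[OF cpsi K(1)] compact_continuous_image by blast
    then have "closed (\<psi> ` K)" by (simp add: compact_imp_closed)
    moreover have "\<psi> ` K \<subseteq> B" using K(1) psiX by auto
    moreover have "\<psi> ` K \<noteq> {}" using K(2) by auto
    moreover have "T ` (\<psi> ` K) \<subseteq> \<psi> ` K"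
    proof clarify
      fix k assume k: "k \<in> K"
      have kb: "\<psi> k \<in> B" using k K(1) psiX by auto
      have "T' k = \<phi> (T (\<psi> k))" by (simp add: T'_def)
      then have "\<phi> (T (\<psi> k)) \<in> K" using K(4) k by auto
      moreover have "\<psi> (\<phi> (T (\<psi> k))) = T (\<psi> k)" using psiphi TB kb by auto
      ultimately show "T (\<psi> k) \<in> \<psi> ` K" by (metis image_eqI)
    qed
    ultimately obtain x where x: "x \<in> \<psi> ` K" "T x = x" using fp unfolding FP_def by blast
    then obtain k where k: "k \<in> K" "x = \<psi> k" by auto
    have "\<phi> x = k" using k K(1) phipsi by auto
    moreover have "T' (\<phi> x) = \<phi> x" using x T'phi k K(1) psiX by auto
    ultimately show "\<exists>x\<in>K. T' x = x" using k by auto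
  qed
  ultimately have mp: "minimal_points X T' = \<phi> ` {x\<in>B. T x = x}"
    using FP_minimal_points[of X T'] by simp
  have hom2: "homeomorphism {x\<in>B. T x = x} (\<phi> ` {x\<in>B. T x = x}) \<phi> \<psi>"
    by (rule homeomorphism_of_subsets[OF hom]) (auto simp: X_def)
  have "minimal_points X T' homeomorphic Z"
  proof -
    have "\<phi> ` {x\<in>B. T x = x} homeomorphic {x\<in>B. T x = x}"
      using hom2 homeomorphic_def homeomorphic_sym by blast
    then show ?thesis unfolding mp using hz homeomorphic_trans by blast
  qed
  moreover have "\<forall>x\<in>minimal_points X T'. T' x = x" using mp fix' by auto
  ultimately show ?thesis using \<open>dyn_system X T'\<close> \<open>top_mixing X T'\<close> by blast
qed




definition SX :: "'a::metric_space set \<Rightarrow> (nat \<Rightarrow> real \<times> 'a) set" where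
  "SX Z = {x. (\<forall>i. fst (x i) = 0 \<or> fst (x i) = 1) \<and> (\<forall>i. snd (x i) \<in> Z) \<and>
     (\<forall>i. snd (x (Suc i)) = snd (x i) \<or> fst (x i) = 1) \<and>
     (\<forall>s n. (\<Sum>i\<in>{s..<s+n}. fst (x i))^2 \<le> real n)}"

definition sh :: "(nat \<Rightarrow> 'b) \<Rightarrow> nat \<Rightarrow> 'b" where "sh x = (\<lambda>i. x (Suc i))"

lemma SX_D:
  assumes "x \<in> SX Z"
  shows "fst (x i) = 0 \<or> fst (x i) = 1" "snd (x i) \<in> Z"
    "snd (x (Suc i)) = snd (x i) \<or> fst (x i) = 1"
    "(\<Sum>i\<in>{s..<s+n}. fst (x i))^2 \<le> real n"
  using assms unfolding SX_def by auto

lemma SX_nonneg: "x \<in> SX Z \<Longrightarrow> fst (x i) \<ge> 0" "x \<in> SX Z \<Longrightarrow> fst (x i) \<le> 1"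
  using SX_D(1)[of x Z i] by auto

lemma wsum:
  assumes "x \<in> SX Z" "A \<subseteq> {s..<s+n}"
  shows "(\<Sum>i\<in>A. fst (x i))^2 \<le> real n"
proof -
  have "0 \<le> (\<Sum>i\<in>A. fst (x i))" using SX_nonneg[OF assms(1)] by (simp add: sum_nonneg)
  moreover have "(\<Sum>i\<in>A. fst (x i)) \<le> (\<Sum>i\<in>{s..<s+n}. fst (x i))"
    by (rule sum_mono2) (use assms SX_nonneg in auto)
  ultimately have "(\<Sum>i\<in>A. fst (x i))^2 \<le> (\<Sum>i\<in>{s..<s+n}. fst (x i))^2"
    by (simp add: power_mono)
  then show ?thesis using SX_D(4)[OF assms(1), of s n] by linarith
qed

lemma cont_coord [continuous_intros]: "continuous_on UNIV (\<lambda>x::nat \<Rightarrow> real \<times> 'a::metric_space. fst (x i))"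
  "continuous_on UNIV (\<lambda>x::nat \<Rightarrow> real \<times> 'a::metric_space. snd (x i))"
  by (intro continuous_intros continuous_on_product_coordinates)+

lemma closed_SX:
  assumes "closed Z"
  shows "closed (SX Z)"
proof -
  have "SX Z = (\<Inter>i. {x. fst (x i) = 0} \<union> {x. fst (x i) = 1}) \<inter> (\<Inter>i. (\<lambda>x. snd (x i)) -` Z)
     \<inter> (\<Inter>i. {x. snd (x (Suc i)) = snd (x i)} \<union> {x. fst (x i) = 1})
     \<inter> (\<Inter>s. \<Inter>n. {x. (\<Sum>i\<in>{s..<s+n}. fst (x i))^2 \<le> real n})"
    unfolding SX_def by auto
  moreover have "closed \<dots>"
    by (intro closed_Int closed_INT ballI closed_Un closed_Collect_eq closed_Collect_le closed_vimage
        assms continuous_intros)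
  ultimately show ?thesis by simp
qed

lemma compact_SX:
  assumes "compact Z"
  shows "compact (SX Z)"
proof -
  have "compactin (product_topology (\<lambda>i. euclidean) UNIV) (PiE UNIV (\<lambda>i::nat. {0::real,1} \<times> Z))"
    by (simp add: compactin_PiE compactin_euclidean_iff assms compact_Times)
  then have "compact (PiE UNIV (\<lambda>i::nat. {0::real,1} \<times> Z))"
    by (simp add: euclidean_product_topology compactin_euclidean_iff)
  moreover have "SX Z \<subseteq> PiE UNIV (\<lambda>i::nat. {0::real,1} \<times> Z)"
    unfolding SX_def by (auto simp: PiE_iff mem_Times_iff)
  ultimately show ?thesis
    using compact_Int_closed[OF _ closed_SX[OF compact_imp_closed[OF assms]]] by (metis inf.absorb2)
qed

lemma sh_iter: "(sh ^^ n) x = (\<lambda>i. x (i + n))"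
  by (induction n arbitrary: x) (auto simp: sh_def funpow_Suc_right)

lemma cont_sh: "continuous_on S (sh :: (nat \<Rightarrow> 'b::topological_space) \<Rightarrow> _)"
  unfolding sh_def
  by (intro continuous_on_coordinatewise_then_product continuous_on_subset[OF continuous_on_product_coordinates]) auto

lemma sh_SX: "x \<in> SX Z \<Longrightarrow> sh x \<in> SX Z"
proof -
  assume x: "x \<in> SX Z"
  have "(\<Sum>i\<in>{s..<s+n}. fst (x (Suc i)))^2 \<le> real n" for s n
  proof -
    have "(\<Sum>i\<in>{Suc s..<Suc (s+n)}. fst (x i)) = (\<Sum>i\<in>{s..<s+n}. fst (x (Suc i)))"
      by (rule sum.shift_bounds_Suc_ivl)
    then have "(\<Sum>i\<in>{s..<s+n}. fst (x (Suc i))) = (\<Sum>i\<in>{Suc s..<Suc s+n}. fst (x i))"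
      by simp
    then show ?thesis using SX_D(4)[OF x, of "Suc s" n] by simp
  qed
  then show ?thesis using x unfolding SX_def sh_def by auto
qed

lemma sh_surj: "sh ` SX Z = SX Z"
proof
  show "sh ` SX Z \<subseteq> SX Z" using sh_SX by auto
  show "SX Z \<subseteq> sh ` SX Z"
  proof
    fix x assume x: "x \<in> SX Z"
    define w where "w = (\<lambda>i. if i = 0 then (0::real, snd (x 0)) else x (i - 1))"
    have "sh w = x" by (simp add: w_def sh_def)
    moreover have "w \<in> SX Z"
    proof -
      have "(\<Sum>i\<in>{s..<s+n}. fst (w i))^2 \<le> real n" for s n
      proof -
        have "(\<Sum>i\<in>{s..<s+n}. fst (w i)) = (\<Sum>i\<in>{s..<s+n} - {0}. fst (x (i - 1)))"
          by (rule sum.mono_neutral_cong_right) (auto simp: w_def)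
        also have "\<dots> = (\<Sum>j\<in>(\<lambda>i. i - 1) ` ({s..<s+n} - {0}). fst (x j))"
          by (rule sum.reindex[symmetric, unfolded comp_def]) (auto simp: inj_on_def)
        finally have e: "(\<Sum>i\<in>{s..<s+n}. fst (w i)) = (\<Sum>j\<in>(\<lambda>i. i - 1) ` ({s..<s+n} - {0}). fst (x j))" .
        have "(\<lambda>i. i - 1) ` ({s..<s+n} - {0}) \<subseteq> {s-1..<(s-1)+n}" by auto
        from wsum[OF x this] show ?thesis unfolding e .
      qed
      moreover have "snd (w (Suc i)) = snd (w i) \<or> fst (w i) = 1" for i
        using SX_D(3)[OF x, of "i-1"] by (cases i) (auto simp: w_def)
      ultimately show ?thesis using x SX_D[OF x] unfolding SX_def w_def by auto
    qed
    ultimately show "x \<in> sh ` SX Z" by blast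
  qed
qed




lemma cyl:
  fixes U :: "(nat \<Rightarrow> 'b::topological_space) set"
  assumes "open U" "u \<in> U"
  obtains m where "\<And>w. (\<forall>i<m. w i = u i) \<Longrightarrow> w \<in> U"
proof -
  have "openin (product_topology (\<lambda>i. euclidean) UNIV) U"
    using assms(1) by (simp add: euclidean_product_topology)
  from product_topology_open_contains_basis[OF this assms(2)] obtain X where
    X: "u \<in> PiE UNIV X" "\<forall>i. openin euclidean (X i)" "finite {i. X i \<noteq> topspace euclidean}"
       "PiE UNIV X \<subseteq> U" by blast
  obtain m where m: "{i. X i \<noteq> UNIV} \<subseteq> {..<m}" using X(3) finite_nat_iff_bounded by auto
  show ?thesis
  proof (rule that)
    fix w :: "nat \<Rightarrow> 'b" assume w: "\<forall>i<m. w i = u i"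
    have "w i \<in> X i" for i
    proof (cases "X i = UNIV")
      case False
      then have "i < m" using m by auto
      then show ?thesis using w X(1) by (auto simp: PiE_iff)
    qed auto
    then have "w \<in> PiE UNIV X" by (auto simp: PiE_iff)
    then show "w \<in> U" using X(4) by auto
  qed
qed

definition glue :: "(nat \<Rightarrow> real \<times> 'a) \<Rightarrow> (nat \<Rightarrow> real \<times> 'a) \<Rightarrow> nat \<Rightarrow> nat \<Rightarrow> nat \<Rightarrow> nat \<Rightarrow> real \<times> 'a" where
  "glue u v m h n i = (if i < m then u i else if i < m+h then (0, snd (u (m-1)))
     else if i = m+h then (1, snd (u (m-1))) else if i < n then (0, snd (v 0))
     else if i < n+m then v (i-n) else (0, snd (v (m-1))))"

lemma sq_bound: "(0::real) \<le> a \<Longrightarrow> a \<le> b \<Longrightarrow> b^2 \<le> c \<Longrightarrow> a^2 \<le> c"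
  by (meson order_trans power_mono)

lemma glue_SX:
  assumes u: "u \<in> SX Z" and v: "v \<in> SX Z" and m: "m \<ge> 1" and h: "h \<ge> (2*m+1)^2"
    and n: "n \<ge> m + 2*h + 1"
  shows "glue u v m h n \<in> SX Z"
proof -
  define w where "w = glue u v m h n"
  define p where "p = m + h"
  have f01: "fst (w i) = 0 \<or> fst (w i) = 1" for i
    using SX_D(1)[OF u, of i] SX_D(1)[OF v, of "i-n"] by (auto simp: w_def glue_def)
  have fnn: "0 \<le> fst (w i)" "fst (w i) \<le> 1" for i using f01[of i] by auto
  have sZ: "snd (w i) \<in> Z" for i
    using SX_D(2)[OF u] SX_D(2)[OF v] by (auto simp: w_def glue_def)
  have zc: "snd (w (Suc i)) = snd (w i) \<or> fst (w i) = 1" for i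
  proof -
    consider "Suc i < m" | "Suc i = m" | "m \<le> i \<and> Suc i < n" | "Suc i = n" | "n \<le> i \<and> Suc i < n + m"
      | "Suc i = n + m" | "n + m \<le> i" by linarith
    then show ?thesis
    proof cases
      case 1 then show ?thesis using SX_D(3)[OF u, of i] by (auto simp: w_def glue_def)
    next
      case 2 then show ?thesis using m n by (auto simp: w_def glue_def)
    next
      case 3 then show ?thesis using m n by (auto simp: w_def glue_def)
    next
      case 4 then show ?thesis using m n by (auto simp: w_def glue_def)
    next
      case 5
      then have "Suc i - n = Suc (i - n)" by auto
      then show ?thesis using 5 SX_D(3)[OF v, of "i - n"] m n by (auto simp: w_def glue_def)
    next
      case 6
      then have "i - n = m - 1" by auto
      then show ?thesis using 6 m n by (auto simp: w_def glue_def)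
    next
      case 7 then show ?thesis using m n by (auto simp: w_def glue_def)
    qed
  qed
  have win: "(\<Sum>i\<in>{s..<s+len}. fst (w i))^2 \<le> real len" for s len
  proof -
    let ?W = "{s..<s+len}"
    let ?S = "\<Sum>i\<in>?W. fst (w i)"
    have S0: "0 \<le> ?S" using fnn by (simp add: sum_nonneg)
    consider "s + len \<le> p" | "p < s" | "s \<le> p \<and> p < s + len" by linarith
    then show ?thesis
    proof cases
      case 1
      have "?S \<le> (\<Sum>i\<in>?W. fst (u i))"
      proof (rule sum_mono)
        fix i assume "i \<in> ?W"
        then have "i < p" using 1 by auto
        then show "fst (w i) \<le> fst (u i)" using SX_nonneg[OF u, of i]
          by (auto simp: w_def glue_def p_def)
      qed
      then show ?thesis using sq_bound[OF S0 _ SX_D(4)[OF u, of s len]] by blast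
    next
      case 2
      let ?A = "?W \<inter> {n..}"
      have "?S \<le> (\<Sum>i\<in>?A. fst (v (i - n)))"
      proof -
        have "?S = (\<Sum>i\<in>?A. fst (w i))"
        proof (rule sum.mono_neutral_right)
          show "\<forall>i\<in>?W - ?A. fst (w i) = 0"
          proof
            fix i assume "i \<in> ?W - ?A"
            then have "p < i" "i < n" using 2 by auto
            then show "fst (w i) = 0" by (auto simp: w_def glue_def p_def)
          qed
        qed auto
        also have "\<dots> \<le> (\<Sum>i\<in>?A. fst (v (i - n)))"
        proof (rule sum_mono)
          fix i assume "i \<in> ?A"
          then show "fst (w i) \<le> fst (v (i - n))" using SX_nonneg[OF v, of "i-n"] n
            by (auto simp: w_def glue_def p_def)
        qed
        finally show ?thesis .
      qed
      also have "\<dots> = (\<Sum>j\<in>(\<lambda>i. i - n) ` ?A. fst (v j))"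
        by (rule sum.reindex[symmetric, unfolded comp_def]) (auto simp: inj_on_def)
      finally have le: "?S \<le> (\<Sum>j\<in>(\<lambda>i. i - n) ` ?A. fst (v j))" .
      have "(\<lambda>i. i - n) ` ?A \<subseteq> {s-n..<(s-n)+len}" by auto
      from wsum[OF v this] show ?thesis using sq_bound[OF S0 le] by blast
    next
      case 3
      define B where "B = {..<m} \<union> {p} \<union> {n..<n+m}"
      have "?S \<le> (\<Sum>i\<in>?W. if i \<in> B then 1 else 0)"
      proof (rule sum_mono)
        fix i assume "i \<in> ?W"
        show "fst (w i) \<le> (if i \<in> B then 1 else 0)"
          using fnn[of i] n by (auto simp: w_def glue_def B_def p_def)
      qed
      also have "\<dots> = real (card (?W \<inter> B))"
        by (simp add: sum.inter_restrict[symmetric])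
      finally have Sc: "?S \<le> real (card (?W \<inter> B))" .
      show ?thesis
      proof (cases "len \<ge> (2*m+1)^2")
        case True
        have "card (?W \<inter> B) \<le> card B" by (rule card_mono) (auto simp: B_def)
        also have "\<dots> \<le> card ({..<m} \<union> {p}) + card {n..<n+m}" unfolding B_def by (rule card_Un_le)
        also have "\<dots> \<le> (card {..<m} + card {p}) + card {n..<n+m}" using card_Un_le[of "{..<m}" "{p}"] by simp
        finally have "card (?W \<inter> B) \<le> 2*m+1" by simp
        then have "?S \<le> real (2*m+1)" using Sc by linarith
        moreover have "(real (2*m+1))^2 \<le> real len" using True by (metis of_nat_le_iff of_nat_power)
        ultimately show ?thesis using sq_bound[OF S0] by blast
      next
        case False
        then have "len < h" using h by linarith
        have "?W \<inter> B \<subseteq> {p}"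
        proof
          fix i assume i: "i \<in> ?W \<inter> B"
          show "i \<in> {p}"
          proof (rule ccontr)
            assume "i \<notin> {p}"
            then have "i < m \<or> n \<le> i" using i B_def by auto
            then show False using i 3 \<open>len < h\<close> n unfolding p_def by auto
          qed
        qed
        then have "card (?W \<inter> B) \<le> 1" using card_mono[of "{p}"] by fastforce
        then have "?S \<le> 1" using Sc by linarith
        moreover have "(1::real)^2 \<le> real len" using 3 by simp
        ultimately show ?thesis using sq_bound[OF S0] by blast
      qed
    qed
  qed
  show ?thesis unfolding SX_def using f01 sZ zc win w_def by auto
qed




lemma glue_pre: "i < m \<Longrightarrow> glue u v m h n i = u i" by (simp add: glue_def)
lemma glue_post: "i < m \<Longrightarrow> n > m + h \<Longrightarrow> glue u v m h n (i + n) = v i" by (simp add: glue_def)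

lemma sh_iter_SX: "x \<in> SX Z \<Longrightarrow> (sh ^^ t) x \<in> SX Z"
  by (induction t) (auto simp: sh_SX)

lemma SX_perfect:
  assumes x: "x \<in> SX Z"
  shows "x islimpt SX Z"
  unfolding islimpt_def
proof (intro allI impI)
  fix U assume "x \<in> U" "open U"
  then obtain m0 where m0: "\<And>w. (\<forall>i<m0. w i = x i) \<Longrightarrow> w \<in> U" using cyl by blast
  define m where "m = max m0 1"
  define h1 where "h1 = (2*m+1)^2"
  define w1 where "w1 = glue x x m h1 (m + 2*h1 + 1)"
  define w2 where "w2 = glue x x m (h1+1) (m + 2*(h1+1) + 1)"
  have s1: "w1 \<in> SX Z" unfolding w1_def by (rule glue_SX[OF x x]) (auto simp: m_def h1_def)
  have s2: "w2 \<in> SX Z" unfolding w2_def by (rule glue_SX[OF x x]) (auto simp: m_def h1_def)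
  have u1: "w1 \<in> U" by (rule m0) (auto simp: w1_def glue_pre m_def)
  have u2: "w2 \<in> U" by (rule m0) (auto simp: w2_def glue_pre m_def)
  have "fst (w1 (m+h1)) = 1" "fst (w2 (m+h1)) = 0" by (auto simp: w1_def w2_def glue_def)
  then have "w1 \<noteq> w2" by auto
  then show "\<exists>y\<in>SX Z. y \<in> U \<and> y \<noteq> x"
  proof (cases "w1 = x")
    case True then show ?thesis using s2 u2 \<open>w1 \<noteq> w2\<close> by auto
  next
    case False then show ?thesis using s1 u1 by auto
  qed
qed

lemma SX_mixing:
  fixes Z :: "'a::metric_space set"
  shows "top_mixing (SX Z) sh"
  unfolding top_mixing_def
proof (intro allI impI)
  fix U V assume U: "openin (top_of_set (SX Z)) U" and V: "openin (top_of_set (SX Z)) V"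
    and "U \<noteq> {}" "V \<noteq> {}"
  obtain U0 where U0: "open U0" "U = SX Z \<inter> U0" using U by (auto simp: openin_open)
  obtain V0 where V0: "open V0" "V = SX Z \<inter> V0" using V by (auto simp: openin_open)
  obtain u where u: "u \<in> U" using \<open>U \<noteq> {}\<close> by auto
  obtain v where v: "v \<in> V" using \<open>V \<noteq> {}\<close> by auto
  obtain m1 where m1: "\<And>w. (\<forall>i<m1. w i = u i) \<Longrightarrow> w \<in> U0" using cyl[OF U0(1)] u U0(2) by blast
  obtain m2 where m2: "\<And>w. (\<forall>i<m2. w i = v i) \<Longrightarrow> w \<in> V0" using cyl[OF V0(1)] v V0(2) by blast
  define m where "m = max (max m1 m2) 1"
  define h where "h = (2*m+1)^2"
  have "{n. U \<inter> {x\<in>SX Z. (sh ^^ n) x \<in> V} = {}} \<subseteq> {..<m+2*h+1}"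
  proof
    fix n assume n: "n \<in> {n. U \<inter> {x\<in>SX Z. (sh ^^ n) x \<in> V} = {}}"
    show "n \<in> {..<m+2*h+1}"
    proof (rule ccontr)
      assume "n \<notin> {..<m+2*h+1}"
      then have nn: "n \<ge> m + 2*h + 1" by auto
      define w where "w = glue u v m h n"
      have wS: "w \<in> SX Z" unfolding w_def
        by (rule glue_SX) (use u v U0 V0 nn in \<open>auto simp: m_def h_def\<close>)
      have "w \<in> U0" by (rule m1) (auto simp: w_def glue_pre m_def)
      have "(sh ^^ n) w \<in> V0"
        by (rule m2) (use nn in \<open>auto simp: sh_iter w_def glue_post m_def\<close>)
      then have "w \<in> U \<inter> {x\<in>SX Z. (sh ^^ n) x \<in> V}"
        using wS \<open>w \<in> U0\<close> U0 V0 sh_iter_SX[OF wS, of n] by auto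
      then show False using n by auto
    qed
  qed
  then show "finite {n. U \<inter> {x\<in>SX Z. (sh ^^ n) x \<in> V} = {}}" using finite_subset by blast
qed

lemma gap:
  assumes x: "x \<in> SX Z"
  shows "\<exists>t. \<forall>i<k. fst (x (t + i)) = 0"
proof (rule ccontr)
  assume nt: "\<not> (\<exists>t. \<forall>i<k. fst (x (t + i)) = 0)"
  have bad: "\<forall>t. \<exists>i<k. fst (x (t + i)) = 1"
  proof
    fix t
    obtain i where "i < k" "fst (x (t + i)) \<noteq> 0" using nt by blast
    then show "\<exists>i<k. fst (x (t + i)) = 1" using SX_D(1)[OF x, of "t+i"] by blast
  qed
  then have "k > 0" by auto
  define j where "j = k + 1"
  have blk: "1 \<le> (\<Sum>i\<in>{b*k..<b*k+k}. fst (x i))" for b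
  proof -
    obtain i where i: "i < k" "fst (x (b*k + i)) = 1" using bad by blast
    have "fst (x (b*k+i)) \<le> (\<Sum>i\<in>{b*k..<b*k+k}. fst (x i))"
      by (rule member_le_sum) (use i SX_nonneg[OF x] in auto)
    then show ?thesis using i by simp
  qed
  have "real j \<le> (\<Sum>b<j. \<Sum>i\<in>{b*k..<b*k+k}. fst (x i))"
    using sum_mono[of "{..<j}" "\<lambda>b. 1" "\<lambda>b. \<Sum>i\<in>{b*k..<b*k+k}. fst (x i)"] blk by simp
  also have "\<dots> = (\<Sum>i<j*k. fst (x i))" by (rule sum.nat_group)
  also have "\<dots> = (\<Sum>i\<in>{0..<0+j*k}. fst (x i))" by (simp add: lessThan_atLeast0)
  finally have le: "real j \<le> (\<Sum>i\<in>{0..<0+j*k}. fst (x i))" .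
  have "(real j)^2 \<le> real (j*k)"
    using sq_bound[OF _ le SX_D(4)[OF x, of 0 "j*k"]] by simp
  then have "real (j * j) \<le> real (j * k)" by (simp add: power2_eq_square)
  then have "j * j \<le> j * k" by (simp only: of_nat_le_iff)
  then show False using j_def by simp
qed

lemma SX_FP:
  assumes cZ: "compact Z"
  shows "FP (SX Z) sh"
  unfolding FP_def
proof (intro allI impI)
  fix K assume K: "K \<subseteq> SX Z" "K \<noteq> {}" "closed K" "sh ` K \<subseteq> K"
  have cK: "compact K" using compact_Int_closed[OF compact_SX[OF cZ] K(3)] K(1) by (simp add: Int_absorb1)
  have Kit: "(sh ^^ t) y \<in> K" if "y \<in> K" for y t using that K(4) by (induction t) auto
  define F where "F = (\<lambda>k::nat. {w::nat \<Rightarrow> real \<times> 'a. \<forall>i<k. fst (w i) = 0})"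
  have "K \<inter> (\<Inter>k\<in>UNIV. F k) \<noteq> {}"
  proof (rule compact_imp_fip_image[OF cK])
    fix k :: nat
    have "F k = (\<Inter>i\<in>{..<k}. {w. fst (w i) = 0})" unfolding F_def by auto
    also have "closed \<dots>" by (intro closed_INT ballI closed_Collect_eq continuous_intros)
    finally show "closed (F k)" .
  next
    fix I' :: "nat set" assume "finite I'"
    then obtain M where M: "I' \<subseteq> {..<M}" using finite_nat_iff_bounded by auto
    obtain x0 where x0: "x0 \<in> K" using K(2) by auto
    then have "x0 \<in> SX Z" using K(1) by auto
    then obtain t where t: "\<forall>i<M. fst (x0 (t + i)) = 0" using gap by blast
    have "(sh ^^ t) x0 \<in> K" using Kit x0 by blast
    moreover have "(sh ^^ t) x0 \<in> F k" if "k \<in> I'" for k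
      using that M t by (auto simp: F_def sh_iter add.commute)
    ultimately show "K \<inter> (\<Inter>k\<in>I'. F k) \<noteq> {}" by blast
  qed
  then obtain w where w: "w \<in> K" "\<And>k. w \<in> F k" by blast
  have f0: "fst (w i) = 0" for i using w(2)[of "Suc i"] by (auto simp: F_def)
  have "w (Suc i) = w i" for i
  proof -
    have "snd (w (Suc i)) = snd (w i)" using SX_D(3)[of w Z i] w(1) K(1) f0[of i] by auto
    then show ?thesis using f0[of i] f0[of "Suc i"] by (simp add: prod_eq_iff)
  qed
  then have "sh w = w" by (auto simp: sh_def)
  then show "\<exists>x\<in>K. sh x = x" using w by blast
qed

lemma SX_fix:
  fixes Z :: "'a::metric_space set"
  assumes cZ: "compact Z"
  shows "{x\<in>SX Z. sh x = x} homeomorphic Z"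
proof -
  define f where "f = (\<lambda>z::'a. \<lambda>i::nat. (0::real, z))"
  have "{x\<in>SX Z. sh x = x} = f ` Z"
  proof
    show "{x\<in>SX Z. sh x = x} \<subseteq> f ` Z"
    proof clarify
      fix x assume x: "x \<in> SX Z" "sh x = x"
      have c: "x i = x 0" for i
      proof (induction i)
        case (Suc i) then show ?case using fun_cong[OF x(2), of i] by (simp add: sh_def)
      qed simp
      have "fst (x 0) \<noteq> 1"
      proof
        assume a: "fst (x 0) = 1"
        have "(\<Sum>i\<in>{0..<0+2}. fst (x i)) = 2" using a c[of 1] by (simp add: numeral_2_eq_2)
        then show False using SX_D(4)[OF x(1), of 0 2] by simp
      qed
      then have "fst (x 0) = 0" using SX_D(1)[OF x(1)] by auto
      then have "x = f (snd (x 0))" unfolding f_def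
      proof (intro ext)
        fix i assume "fst (x 0) = 0"
        then show "x i = (0, snd (x 0))" using c[of i] by (metis prod.collapse)
      qed
      moreover have "snd (x 0) \<in> Z" using SX_D(2)[OF x(1)] .
      ultimately show "x \<in> f ` Z" by blast
    qed
    show "f ` Z \<subseteq> {x\<in>SX Z. sh x = x}" by (auto simp: f_def SX_def sh_def)
  qed
  moreover have "continuous_on Z f" unfolding f_def by (intro continuous_intros)
  moreover have "inj_on f Z" unfolding f_def inj_on_def by (metis snd_conv)
  ultimately obtain g where "homeomorphism Z {x\<in>SX Z. sh x = x} f g"
    using homeomorphism_compact[OF cZ, of f "{x\<in>SX Z. sh x = x}"] by auto
  then show ?thesis using homeomorphic_def homeomorphic_sym by blast
qed

theorem proposition6p3:
  fixes Z :: "'a::metric_space set"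
  assumes "compact Z" and "Z \<noteq> {}"
  shows "\<exists>(X :: (nat \<Rightarrow> real) set) T.
           dyn_system X T \<and> top_mixing X T \<and>
           minimal_points X T homeomorphic Z \<and>
           (\<forall>x\<in>minimal_points X T. T x = x)"
proof (rule transfer)
  obtain z where z: "z \<in> Z" using assms(2) by auto
  have x0: "(\<lambda>i::nat. (0::real, z)) \<in> SX Z" using z by (auto simp: SX_def)
  show "dyn_system (SX Z) sh"
    unfolding dyn_system_def
  proof (intro conjI)
    show "compact (SX Z)" by (rule compact_SX[OF assms(1)])
    show "\<forall>x\<in>SX Z. x islimpt SX Z" using SX_perfect by blast
    then have "(\<lambda>i::nat. (0::real, z)) islimpt SX Z" using x0 by blast
    then obtain y where "y \<in> SX Z" "y \<noteq> (\<lambda>i::nat. (0::real, z))"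
      using islimptE[of _ "SX Z" UNIV] by blast
    then show "\<exists>x\<in>SX Z. \<exists>y\<in>SX Z. x \<noteq> y" using x0 by blast
    show "continuous_on (SX Z) sh" by (rule cont_sh)
    show "sh ` SX Z = SX Z" by (rule sh_surj)
  qed
  show "top_mixing (SX Z) sh" by (rule SX_mixing)
  show "FP (SX Z) sh" by (rule SX_FP[OF assms(1)])
  show "{x\<in>SX Z. sh x = x} homeomorphic Z" by (rule SX_fix[OF assms(1)])
qed


end
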